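(* Let $R$ be a discrete valuation ring with field of fractions $K$ and uniformizer $\pi$, $V$ a finite-dimensional $K$-vector space, and $B$ a nondegenerate $K$-bilinear form on $V$ with $B(x,y)=\epsilon B(y,x)$ for all $x,y$, where $\epsilon=\pm1$. Let $L$ be a lattice of $V$ and $L'$ its dual lattice. Then $m_-(L,L')$ is an almost self-dual lattice, and its dual lattice is $m_+(L,L')$.
   Context: A lattice of $V$ is a free $R$-submodule $L$ with $K\otimes_R L\to V$ an isomorphism. The dual of a lattice $L$ is $L'=\{x\in V: B(x,y)\in R\ \forall y\in L\}$. A lattice $L$ is almost self-dual if $\pi L'\subset L\subset L'$. $m_-(L,M)=\sum_{n\in\mathbb Z}(\pi^nL\cap\pi^{-n}M)$ (submodule generated) and $m_+(L,M)=\bigcap_{n\in\mathbb Z}(\pi^nL+\pi^{-n}M)$. *)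

theory Defs
  imports Main "HOL.Vector_Spaces"
begin

text \<open>K is the type 'k (a field); R is a subset of K.\<close>

definition subring_of :: "'k::field set \<Rightarrow> bool" where
  "subring_of R \<longleftrightarrow> 0 \<in> R \<and> 1 \<in> R \<and> (\<forall>x\<in>R. \<forall>y\<in>R. x + y \<in> R \<and> x * y \<in> R) \<and> (\<forall>x\<in>R. - x \<in> R)"

definition unit_in :: "'k::field set \<Rightarrow> 'k \<Rightarrow> bool" where
  "unit_in R x \<longleftrightarrow> x \<in> R \<and> x \<noteq> 0 \<and> inverse x \<in> R"

definition ideal_in :: "'k::field set \<Rightarrow> 'k set \<Rightarrow> bool" where
  "ideal_in R I \<longleftrightarrow> I \<subseteq> R \<and> 0 \<in> I \<and> (\<forall>x\<in>I. \<forall>y\<in>I. x + y \<in> I) \<and> (\<forall>r\<in>R. \<forall>x\<in>I. r * x \<in> I)"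

text \<open>A DVR: a local principal ideal domain that is not a field
  (local = the non-units form an ideal).\<close>
definition dvr :: "'k::field set \<Rightarrow> bool" where
  "dvr R \<longleftrightarrow> subring_of R
     \<and> (\<forall>I. ideal_in R I \<longrightarrow> (\<exists>a\<in>R. I = (\<lambda>r. a * r) ` R))
     \<and> ideal_in R {x \<in> R. \<not> unit_in R x}
     \<and> (\<exists>x\<in>R. x \<noteq> 0 \<and> \<not> unit_in R x)"

definition fraction_field_is_UNIV :: "'k::field set \<Rightarrow> bool" where
  "fraction_field_is_UNIV R \<longleftrightarrow> (\<forall>x::'k. \<exists>a\<in>R. \<exists>b\<in>R. b \<noteq> 0 \<and> x = a / b)"

definition uniformizer :: "'k::field set \<Rightarrow> 'k \<Rightarrow> bool" where
  "uniformizer R p \<longleftrightarrow> p \<in> R \<and> p \<noteq> 0 \<and> {x \<in> R. \<not> unit_in R x} = (\<lambda>r. p * r) ` R"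

definition bilinear_form :: "('k::field \<Rightarrow> 'v::ab_group_add \<Rightarrow> 'v) \<Rightarrow> ('v \<Rightarrow> 'v \<Rightarrow> 'k) \<Rightarrow> bool" where
  "bilinear_form scale B \<longleftrightarrow>
     (\<forall>x y z. B (x + y) z = B x z + B y z \<and> B x (y + z) = B x y + B x z)
   \<and> (\<forall>c x y. B (scale c x) y = c * B x y \<and> B x (scale c y) = c * B x y)"

definition nondegenerate :: "('v::ab_group_add \<Rightarrow> 'v \<Rightarrow> 'k::field) \<Rightarrow> bool" where
  "nondegenerate B \<longleftrightarrow> (\<forall>x. (\<forall>y. B x y = 0) \<longrightarrow> x = 0) \<and> (\<forall>y. (\<forall>x. B x y = 0) \<longrightarrow> y = 0)"

definition Rspan :: "('k::field \<Rightarrow> 'v::ab_group_add \<Rightarrow> 'v) \<Rightarrow> 'k set \<Rightarrow> 'v set \<Rightarrow> 'v set" where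
  "Rspan scale R S = {(\<Sum>b\<in>T. scale (c b) b) | T c. finite T \<and> T \<subseteq> S \<and> (\<forall>b\<in>T. c b \<in> R)}"

text \<open>A lattice: a free R-submodule L whose R-basis is (via K \<otimes>_R L \<cong> V) a K-basis of V.\<close>
definition is_lattice :: "('k::field \<Rightarrow> 'v::ab_group_add \<Rightarrow> 'v) \<Rightarrow> 'k set \<Rightarrow> 'v set \<Rightarrow> bool" where
  "is_lattice scale R L \<longleftrightarrow> (\<exists>Bs. finite Bs \<and> \<not> module.dependent scale Bs
       \<and> module.span scale Bs = UNIV \<and> L = Rspan scale R Bs)"

definition dual_lattice :: "('v \<Rightarrow> 'v \<Rightarrow> 'k::field) \<Rightarrow> 'k set \<Rightarrow> 'v set \<Rightarrow> 'v set" where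
  "dual_lattice B R L = {x. \<forall>y\<in>L. B x y \<in> R}"

definition almost_self_dual ::
  "('k::field \<Rightarrow> 'v::ab_group_add \<Rightarrow> 'v) \<Rightarrow> ('v \<Rightarrow> 'v \<Rightarrow> 'k) \<Rightarrow> 'k set \<Rightarrow> 'k \<Rightarrow> 'v set \<Rightarrow> bool" where
  "almost_self_dual scale B R p L \<longleftrightarrow> is_lattice scale R L
     \<and> scale p ` dual_lattice B R L \<subseteq> L \<and> L \<subseteq> dual_lattice B R L"

definition m_minus :: "('k::field \<Rightarrow> 'v::ab_group_add \<Rightarrow> 'v) \<Rightarrow> 'k set \<Rightarrow> 'k \<Rightarrow> 'v set \<Rightarrow> 'v set \<Rightarrow> 'v set" where
  "m_minus scale R p L M = Rspan scale R (\<Union>n::int. scale (p powi n) ` L \<inter> scale (p powi (- n)) ` M)"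

definition m_plus :: "('k::field \<Rightarrow> 'v::ab_group_add \<Rightarrow> 'v) \<Rightarrow> 'k \<Rightarrow> 'v set \<Rightarrow> 'v set \<Rightarrow> 'v set" where
  "m_plus scale p L M = (\<Inter>n::int. {a + b | a b. a \<in> scale (p powi n) ` L \<and> b \<in> scale (p powi (- n)) ` M})"

end

theory Submission
  imports Defs
begin


locale dvr_ctx =
  fixes R :: "'k::field set" and p :: 'k
  assumes dvr: "dvr R" and ff: "fraction_field_is_UNIV R" and unif: "uniformizer R p"
begin

lemma sub: "subring_of R" using dvr by (simp add: dvr_def)
lemma R0[simp]: "0 \<in> R" using sub by (simp add: subring_of_def)
lemma R1[simp]: "1 \<in> R" using sub by (simp add: subring_of_def)
lemma Radd[intro]: "x \<in> R \<Longrightarrow> y \<in> R \<Longrightarrow> x + y \<in> R" using sub by (simp add: subring_of_def)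
lemma Rmult[intro]: "x \<in> R \<Longrightarrow> y \<in> R \<Longrightarrow> x * y \<in> R" using sub by (simp add: subring_of_def)
lemma Rneg[intro]: "x \<in> R \<Longrightarrow> - x \<in> R" using sub by (simp add: subring_of_def)
lemma Rdiff[intro]: "x \<in> R \<Longrightarrow> y \<in> R \<Longrightarrow> x - y \<in> R"
  using Radd[of x "-y"] Rneg[of y] by simp
lemma pR[simp]: "p \<in> R" using unif by (simp add: uniformizer_def)
lemma pnz[simp]: "p \<noteq> 0" using unif by (simp add: uniformizer_def)
lemma Rpow[intro]: "x \<in> R \<Longrightarrow> x ^ n \<in> R" by (induction n) auto
lemma Rpowi[intro]: "n \<ge> 0 \<Longrightarrow> p powi n \<in> R"
proof -
  assume "n \<ge> 0" then obtain k where "n = int k" by (metis nonneg_eq_int)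
  then show ?thesis by (simp add: power_int_of_nat Rpow)
qed
lemma Rsum[intro]: "(\<And>i. i \<in> S \<Longrightarrow> f i \<in> R) \<Longrightarrow> sum f S \<in> R"
  by (induction S rule: infinite_finite_induct) auto

lemma p_nonunit: "\<not> unit_in R p"
proof -
  have "p \<in> (\<lambda>r. p * r) ` R" using R1 by (metis image_eqI mult_1_right)
  then have "p \<in> {x \<in> R. \<not> unit_in R x}" using unif by (simp add: uniformizer_def)
  then show ?thesis by simp
qed

lemma R_decomp:
  assumes r: "r \<in> R" "r \<noteq> 0"
  shows "\<exists>n u. unit_in R u \<and> r = u * p ^ n"
proof (rule ccontr)
  assume H: "\<not> (\<exists>n u. unit_in R u \<and> r = u * p ^ n)"
  have step: "r / p ^ n \<in> R" for n
  proof (induction n)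
    case 0 then show ?case using r by simp
  next
    case (Suc n)
    let ?s = "r / p ^ n"
    have "\<not> unit_in R ?s"
    proof
      assume "unit_in R ?s"
      moreover have "r = ?s * p ^ n" by simp
      ultimately show False using H by blast
    qed
    then have "?s \<in> {x \<in> R. \<not> unit_in R x}" using Suc by simp
    then have "?s \<in> (\<lambda>r. p * r) ` R" using unif unfolding uniformizer_def by blast
    then obtain t where t: "t \<in> R" "?s = p * t" by blast
    have "r / p ^ Suc n = ?s / p" by simp
    also have "\<dots> = t" using t(2) by simp
    finally show ?case using t by simp
  qed
  define I where "I = {x. \<exists>n. \<exists>s\<in>R. x = r / p ^ n * s}"
  have key: "r / p ^ n = r / p ^ (n + m) * p ^ m" for n m
    by (simp add: power_add)
  have "ideal_in R I"
    unfolding ideal_in_def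
  proof (intro conjI ballI)
    show "I \<subseteq> R" unfolding I_def using step Rmult by fastforce
    show "0 \<in> I" unfolding I_def by (rule CollectI, rule exI[of _ 0], rule bexI[of _ 0]) auto
    fix x y assume "x \<in> I" "y \<in> I"
    then obtain n s m t where ns: "s \<in> R" "x = r / p ^ n * s" and mt: "t \<in> R" "y = r / p ^ m * t"
      unfolding I_def by blast
    have "x + y = r / p ^ (n + m) * (p ^ m * s + p ^ n * t)"
      using ns(2) mt(2) key[of n m] key[of m n] by (simp add: algebra_simps)
    moreover have "p ^ m * s + p ^ n * t \<in> R" using ns mt by (intro Radd Rmult Rpow pR) auto
    ultimately show "x + y \<in> I" unfolding I_def by blast
  next
    fix a x assume "a \<in> R" "x \<in> I"
    then obtain n s where ns: "s \<in> R" "x = r / p ^ n * s" unfolding I_def by blast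
    have "a * x = r / p ^ n * (a * s)" using ns by simp
    then show "a * x \<in> I" unfolding I_def using ns \<open>a \<in> R\<close> by blast
  qed
  then obtain a where a: "a \<in> R" "I = (\<lambda>x. a * x) ` R" using dvr by (auto simp: dvr_def)
  have "a \<in> I" using a by (metis R1 image_eqI mult_1_right)
  then obtain n s where ns: "s \<in> R" "a = r / p ^ n * s" unfolding I_def by blast
  have "r / p ^ Suc n \<in> I" unfolding I_def by (rule CollectI, rule exI[of _ "Suc n"], rule bexI[of _ 1]) auto
  then obtain t where t: "t \<in> R" "r / p ^ Suc n = a * t" using a by blast
  have "r / p ^ Suc n = r / p ^ n * (s * t)" using t ns by simp
  then have "inverse p = s * t" using r(2) by (simp add: field_simps)
  then have "unit_in R p" unfolding unit_in_def using ns t by auto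
  then show False using p_nonunit by simp
qed

lemma absorb_K: "\<exists>n. p ^ n * x \<in> R"
proof -
  obtain a b where ab: "a \<in> R" "b \<in> R" "b \<noteq> 0" "x = a / b" using ff unfolding fraction_field_is_UNIV_def by blast
  obtain n u where nu: "unit_in R u" "b = u * p ^ n" using R_decomp ab by blast
  have "p ^ n * x = a * inverse u" using ab nu by (simp add: field_simps unit_in_def)
  moreover have "a * inverse u \<in> R" using ab nu unfolding unit_in_def by auto
  ultimately show ?thesis by metis
qed

lemma absorb_mono: "p ^ n * x \<in> R \<Longrightarrow> n \<le> m \<Longrightarrow> p ^ m * x \<in> R"
proof -
  assume "p ^ n * x \<in> R" "n \<le> m"
  then have "p ^ (m - n) * (p ^ n * x) \<in> R" using Rmult Rpow pR by blast
  then show ?thesis using \<open>n \<le> m\<close> by (simp add: mult.assoc[symmetric] power_add[symmetric])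
qed

lemma absorb_finite:
  assumes "finite S" shows "\<exists>n. \<forall>x\<in>S. p ^ n * f x \<in> R"
  using assms
proof (induction S rule: finite_induct)
  case empty then show ?case by simp
next
  case (insert a S)
  then obtain n where n: "\<forall>x\<in>S. p ^ n * f x \<in> R" by blast
  obtain m where m: "p ^ m * f a \<in> R" using absorb_K by blast
  show ?case
    by (rule exI[of _ "n + m"]) (use n m absorb_mono in auto)
qed

lemma frac_ideal:
  assumes "0 \<in> I" "\<forall>x\<in>I. \<forall>y\<in>I. x + y \<in> I" "\<forall>r\<in>R. \<forall>x\<in>I. r * x \<in> I"
    "\<forall>x\<in>I. c * x \<in> R" "c \<noteq> 0"
  shows "\<exists>g. I = (\<lambda>r. g * r) ` R"
proof -
  define J where "J = (\<lambda>x. c * x) ` I"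
  have "ideal_in R J" unfolding ideal_in_def J_def
  proof (intro conjI ballI)
    show "(*) c ` I \<subseteq> R" using assms by auto
    show "0 \<in> (*) c ` I" using assms by force
    fix x y assume "x \<in> (*) c ` I" "y \<in> (*) c ` I"
    then obtain x' y' where "x' \<in> I" "y' \<in> I" "x = c * x'" "y = c * y'" by blast
    then show "x + y \<in> (*) c ` I" using assms(2) by (metis distrib_left image_eqI)
  next
    fix r x assume "r \<in> R" "x \<in> (*) c ` I"
    then obtain x' where "x' \<in> I" "x = c * x'" by blast
    then show "r * x \<in> (*) c ` I" using assms(3) \<open>r \<in> R\<close>
      by (metis image_eqI mult.left_commute)
  qed
  then obtain a where a: "J = (\<lambda>x. a * x) ` R" using dvr by (auto simp: dvr_def)
  show ?thesis
  proof (rule exI[of _ "a / c"], intro set_eqI iffI)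
    fix x assume "x \<in> I"
    then have "c * x \<in> J" unfolding J_def by blast
    then obtain r where "r \<in> R" "c * x = a * r" using a by blast
    then show "x \<in> (\<lambda>r. a / c * r) ` R" using assms(5)
      by (intro image_eqI[of _ _ r]) (auto simp: field_simps)
  next
    fix x assume "x \<in> (\<lambda>r. a / c * r) ` R"
    then obtain r where r: "r \<in> R" "x = a / c * r" by blast
    then have "a * r \<in> J" using a by blast
    then obtain y where "y \<in> I" "a * r = c * y" unfolding J_def by blast
    then show "x \<in> I" using r assms(5) by (simp add: field_simps)
  qed
qed

end



definition Rsub :: "('k::field \<Rightarrow> 'v::ab_group_add \<Rightarrow> 'v) \<Rightarrow> 'k set \<Rightarrow> 'v set \<Rightarrow> bool" where
  "Rsub scale R X \<longleftrightarrow> 0 \<in> X \<and> (\<forall>x\<in>X. \<forall>y\<in>X. x + y \<in> X) \<and> (\<forall>r\<in>R. \<forall>x\<in>X. scale r x \<in> X)"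

locale lat_ctx = dvr_ctx R p + vector_space scale
  for R :: "'k::field set" and p :: 'k and scale :: "'k \<Rightarrow> 'v::ab_group_add \<Rightarrow> 'v"
begin

notation scale (infixr \<open>*s\<close> 75)

abbreviation sc :: "int \<Rightarrow> 'v set \<Rightarrow> 'v set" where
  "sc n X \<equiv> scale (p powi n) ` X"

lemma Rsub_0: "Rsub scale R X \<Longrightarrow> 0 \<in> X" by (simp add: Rsub_def)
lemma Rsub_add: "Rsub scale R X \<Longrightarrow> x \<in> X \<Longrightarrow> y \<in> X \<Longrightarrow> x + y \<in> X" by (simp add: Rsub_def)
lemma Rsub_scale: "Rsub scale R X \<Longrightarrow> r \<in> R \<Longrightarrow> x \<in> X \<Longrightarrow> scale r x \<in> X" by (simp add: Rsub_def)
lemma Rsub_neg: "Rsub scale R X \<Longrightarrow> x \<in> X \<Longrightarrow> - x \<in> X"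
  using Rsub_scale[of X "-1" x] Rneg[OF R1] by simp
lemma Rsub_diff: "Rsub scale R X \<Longrightarrow> x \<in> X \<Longrightarrow> y \<in> X \<Longrightarrow> x - y \<in> X"
  using Rsub_add[of X x "-y"] Rsub_neg[of X y] by simp
lemma Rsub_sum: "Rsub scale R X \<Longrightarrow> (\<And>i. i \<in> T \<Longrightarrow> f i \<in> X) \<Longrightarrow> sum f T \<in> X"
  by (induction T rule: infinite_finite_induct) (auto simp: Rsub_0 Rsub_add)

lemma Rspan_Rsub: "Rsub scale R (Rspan scale R S)"
  unfolding Rsub_def
proof (intro conjI ballI)
  show "0 \<in> Rspan scale R S" unfolding Rspan_def by (rule CollectI, rule exI[of _ "{}"]) auto
next
  fix x y assume "x \<in> Rspan scale R S" "y \<in> Rspan scale R S"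
  then obtain T1 c1 T2 c2 where 1: "finite T1" "T1 \<subseteq> S" "\<forall>b\<in>T1. c1 b \<in> R" "x = (\<Sum>b\<in>T1. c1 b *s b)"
    and 2: "finite T2" "T2 \<subseteq> S" "\<forall>b\<in>T2. c2 b \<in> R" "y = (\<Sum>b\<in>T2. c2 b *s b)"
    unfolding Rspan_def by blast
  define d1 where "d1 b = (if b \<in> T1 then c1 b else 0)" for b
  define d2 where "d2 b = (if b \<in> T2 then c2 b else 0)" for b
  have "x = (\<Sum>b\<in>T1 \<union> T2. d1 b *s b)"
    unfolding 1(4) d1_def using 1 2 by (intro sum.mono_neutral_cong_left) auto
  moreover have "y = (\<Sum>b\<in>T1 \<union> T2. d2 b *s b)"
    unfolding 2(4) d2_def using 1 2 by (intro sum.mono_neutral_cong_left) auto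
  ultimately have "x + y = (\<Sum>b\<in>T1 \<union> T2. (d1 b + d2 b) *s b)"
    by (simp add: scale_left_distrib sum.distrib)
  moreover have "\<forall>b\<in>T1 \<union> T2. d1 b + d2 b \<in> R" using 1 2 unfolding d1_def d2_def by auto
  ultimately show "x + y \<in> Rspan scale R S" unfolding Rspan_def using 1 2
    by (intro CollectI exI[of _ "T1 \<union> T2"] exI[of _ "\<lambda>b. d1 b + d2 b"]) auto
next
  fix r x assume "r \<in> R" "x \<in> Rspan scale R S"
  then obtain T c where 1: "finite T" "T \<subseteq> S" "\<forall>b\<in>T. c b \<in> R" "x = (\<Sum>b\<in>T. c b *s b)"
    unfolding Rspan_def by blast
  have "r *s x = (\<Sum>b\<in>T. (r * c b) *s b)" unfolding 1(4) by (simp add: scale_sum_right)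
  moreover have "\<forall>b\<in>T. r * c b \<in> R" using 1 \<open>r \<in> R\<close> by auto
  ultimately show "r *s x \<in> Rspan scale R S" unfolding Rspan_def using 1
    by (intro CollectI exI[of _ T] exI[of _ "\<lambda>b. r * c b"]) auto
qed

lemma Rspan_least: "Rsub scale R X \<Longrightarrow> S \<subseteq> X \<Longrightarrow> Rspan scale R S \<subseteq> X"
  unfolding Rspan_def by (auto intro!: Rsub_sum Rsub_scale)

lemma Rspan_base: "x \<in> S \<Longrightarrow> x \<in> Rspan scale R S"
  unfolding Rspan_def by (rule CollectI, rule exI[of _ "{x}"], rule exI[of _ "\<lambda>_. 1"]) auto

lemma Rspan_mono: "S \<subseteq> T \<Longrightarrow> Rspan scale R S \<subseteq> Rspan scale R T"
  by (meson Rspan_Rsub Rspan_base Rspan_least subset_iff)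

lemma Rspan_empty: "Rspan scale R {} = {0}"
  unfolding Rspan_def by auto

lemma powi_inv: "scale (p powi (- n)) (scale (p powi n) x) = x"
  by (simp add: power_int_minus)
lemma powi_inv2: "scale (p powi n) (scale (p powi (- n)) x) = x"
  by (simp add: power_int_minus)

lemma sc_mem: "y \<in> sc n X \<longleftrightarrow> scale (p powi (- n)) y \<in> X"
proof
  assume "y \<in> sc n X" then show "scale (p powi (- n)) y \<in> X" using powi_inv by auto
next
  assume "scale (p powi (- n)) y \<in> X"
  then show "y \<in> sc n X" using powi_inv2[of n y] by (metis image_eqI)
qed

lemma sc_sc: "sc m (sc n X) = sc (m + n) X"
proof -
  have "p powi m * p powi n = p powi (m + n)" by (simp add: power_int_add)
  then show ?thesis by (auto simp: image_image)
qed

lemma sc_0: "sc 0 X = X" by simp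

lemma sc_mono:
  assumes "Rsub scale R X" "m \<le> n" shows "sc n X \<subseteq> sc m X"
proof
  fix y assume "y \<in> sc n X"
  then obtain x where x: "x \<in> X" "y = scale (p powi n) x" by blast
  have "p powi (n - m) \<in> R" using assms by auto
  then have "scale (p powi (n - m)) x \<in> X" using assms x Rsub_scale by blast
  moreover have "y = scale (p powi m) (scale (p powi (n - m)) x)"
    using x by (simp add: power_int_add[symmetric])
  ultimately show "y \<in> sc m X" by blast
qed

lemma Rsub_sc: "Rsub scale R X \<Longrightarrow> Rsub scale R (sc n X)"
  unfolding Rsub_def
proof (intro conjI ballI)
  assume a: "0 \<in> X \<and> (\<forall>x\<in>X. \<forall>y\<in>X. x + y \<in> X) \<and> (\<forall>r\<in>R. \<forall>x\<in>X. r *s x \<in> X)"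
  show "0 \<in> sc n X" using a by (metis image_eqI scale_zero_right)
  fix x y assume "x \<in> sc n X" "y \<in> sc n X"
  then show "x + y \<in> sc n X" using a by (auto simp: scale_right_distrib[symmetric])
next
  assume a: "0 \<in> X \<and> (\<forall>x\<in>X. \<forall>y\<in>X. x + y \<in> X) \<and> (\<forall>r\<in>R. \<forall>x\<in>X. r *s x \<in> X)"
  fix r x assume "r \<in> R" "x \<in> sc n X"
  then obtain y where "y \<in> X" "x = p powi n *s y" by blast
  then have "r *s x = p powi n *s (r *s y)" by (simp add: mult.commute)
  then show "r *s x \<in> sc n X" using a \<open>r \<in> R\<close> \<open>y \<in> X\<close> by blast
qed

section \<open>Coordinates\<close>

context
  fixes E :: "'v set"
  assumes Efin: "finite E" and Eind: "independent E" and Espan: "span E = UNIV"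
begin

abbreviation rep where "rep \<equiv> representation E"

lemma inspan[simp]: "x \<in> span E" using Espan by simp

lemma rep_add: "rep (x + y) e = rep x e + rep y e"
  by (simp add: representation_add[OF Eind inspan inspan])
lemma rep_diff: "rep (x - y) e = rep x e - rep y e"
  by (simp add: representation_diff[OF Eind inspan inspan])
lemma rep_scale: "rep (scale r x) e = r * rep x e"
  by (simp add: representation_scale[OF Eind inspan])
lemma rep_zero: "rep 0 e = 0" by (simp add: representation_zero)
lemma rep_basis: "b \<in> E \<Longrightarrow> rep b e = (if e = b then 1 else 0)"
  by (simp add: representation_basis[OF Eind])
lemma rep_sum: "finite T \<Longrightarrow> rep (sum f T) e = (\<Sum>i\<in>T. rep (f i) e)"
  by (simp add: representation_sum[OF Eind inspan])
lemma expand: "x = (\<Sum>e\<in>E. rep x e *s e)"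
  by (rule sum_representation_eq[OF Eind inspan Efin, symmetric]) simp

lemma rep_lincomb: "T \<subseteq> E \<Longrightarrow> rep (\<Sum>b\<in>T. c b *s b) e = (if e \<in> T then c e else 0)"
proof -
  assume T: "T \<subseteq> E"
  then have fT: "finite T" using Efin finite_subset by blast
  have "rep (\<Sum>b\<in>T. c b *s b) e = (\<Sum>b\<in>T. c b * rep b e)"
    using fT by (simp add: rep_sum rep_scale)
  also have "\<dots> = (\<Sum>b\<in>T. if b = e then c b else 0)"
    using T by (intro sum.cong) (auto simp: rep_basis)
  also have "\<dots> = (if e \<in> T then c e else 0)" using fT by (simp add: sum.delta)
  finally show ?thesis .
qed

lemma rep_eq0: "(\<forall>e\<in>E. rep x e = 0) \<Longrightarrow> x = 0"
  using expand[of x] by simp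

lemma Rspan_coord: "Rspan scale R E = {x. \<forall>e\<in>E. rep x e \<in> R}"
proof (intro set_eqI iffI)
  fix x assume "x \<in> Rspan scale R E"
  then obtain T c where 1: "finite T" "T \<subseteq> E" "\<forall>b\<in>T. c b \<in> R" "x = (\<Sum>b\<in>T. c b *s b)"
    unfolding Rspan_def by blast
  then show "x \<in> {x. \<forall>e\<in>E. rep x e \<in> R}" by (auto simp: rep_lincomb)
next
  fix x assume "x \<in> {x. \<forall>e\<in>E. rep x e \<in> R}"
  then show "x \<in> Rspan scale R E" unfolding Rspan_def
    by (intro CollectI exI[of _ E] exI[of _ "rep x"]) (use Efin expand in auto)
qed

lemma span_coords0: "S \<subseteq> E \<Longrightarrow> y \<in> span S \<Longrightarrow> e \<in> E - S \<Longrightarrow> rep y e = 0"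
proof -
  assume S: "S \<subseteq> E" and y: "y \<in> span S" and e: "e \<in> E - S"
  have "span S \<subseteq> {y. rep y e = 0}"
  proof (rule span_minimal)
    show "S \<subseteq> {y. rep y e = 0}" using S e by (auto simp: rep_basis)
    show "subspace {y. rep y e = 0}" unfolding subspace_def by (auto simp: rep_zero rep_add rep_scale)
  qed
  then show ?thesis using y by auto
qed

lemma coords0_span: "S \<subseteq> E \<Longrightarrow> (\<forall>e\<in>E - S. rep y e = 0) \<Longrightarrow> y \<in> span S"
proof -
  assume S: "S \<subseteq> E" and z: "\<forall>e\<in>E - S. rep y e = 0"
  have "y = (\<Sum>e\<in>E. rep y e *s e)" by (rule expand)
  also have "\<dots> = (\<Sum>e\<in>S. rep y e *s e)"
    using S z Efin by (intro sum.mono_neutral_cong_right) auto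
  finally show ?thesis using S by (metis (no_types, lifting) span_base span_scale span_sum)
qed

lemma sandwich:
  assumes X: "Rsub scale R X"
    and lo: "\<forall>y\<in>Rspan scale R E. scale (p powi a) y \<in> X"
    and hi: "\<forall>x\<in>X. scale (p powi a) x \<in> Rspan scale R E"
  shows "is_lattice scale R X"
proof -
  define XS where "XS S = {x\<in>X. \<forall>e\<in>E - S. rep x e = 0}" for S
  have XS_Rsub: "Rsub scale R (XS S)" for S
    using X unfolding Rsub_def XS_def by (auto simp: rep_zero rep_add rep_scale)
  have pa: "p powi a \<noteq> 0" by simp
  have main: "\<exists>C. finite C \<and> independent C \<and> span C = span S \<and> Rspan scale R C = XS S"
    if "S \<subseteq> E" for S
    using finite_subset[OF that Efin] that
  proof (induction S rule: finite_subset_induct')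
    case empty
    have "XS {} = {0}" unfolding XS_def using rep_eq0 X Rsub_0 by (auto simp: rep_zero)
    then show ?case by (intro exI[of _ "{}"]) (simp add: Rspan_empty independent_empty)
  next
    case (insert e S)
    then obtain C where C: "finite C" "independent C" "span C = span S" "Rspan scale R C = XS S"
      by blast
    let ?S' = "insert e S"
    define I where "I = (\<lambda>x. rep x e) ` XS ?S'"
    have "\<exists>g. I = (\<lambda>r. g * r) ` R"
    proof (rule frac_ideal[where c = "p powi a"])
      show "0 \<in> I" unfolding I_def using XS_Rsub[of ?S'] Rsub_0 rep_zero by (metis image_eqI)
      show "\<forall>x\<in>I. \<forall>y\<in>I. x + y \<in> I"
      proof (intro ballI)
        fix u v assume "u \<in> I" "v \<in> I"
        then obtain x y where xy: "x \<in> XS ?S'" "y \<in> XS ?S'" "u = rep x e" "v = rep y e"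
          unfolding I_def by blast
        then have "x + y \<in> XS ?S'" using XS_Rsub[of ?S'] Rsub_add by blast
        then show "u + v \<in> I" unfolding I_def using xy
          by (intro image_eqI[of _ _ "x + y"]) (auto simp: rep_add)
      qed
      show "\<forall>r\<in>R. \<forall>x\<in>I. r * x \<in> I"
      proof (intro ballI)
        fix r u assume "r \<in> R" "u \<in> I"
        then obtain x where xy: "x \<in> XS ?S'" "u = rep x e"
          unfolding I_def by blast
        then have "r *s x \<in> XS ?S'" using XS_Rsub[of ?S'] Rsub_scale \<open>r \<in> R\<close> by blast
        then show "r * u \<in> I" unfolding I_def using xy
          by (intro image_eqI[of _ _ "r *s x"]) (auto simp: rep_scale)
      qed
      show "\<forall>x\<in>I. p powi a * x \<in> R" unfolding I_def XS_def
        using hi by (auto simp: Rspan_coord insert rep_scale)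
      show "p powi a \<noteq> 0" by simp
    qed
    then obtain g where g: "I = (\<lambda>r. g * r) ` R" by blast
    have eE: "e \<in> E" using insert by simp
    have "scale (p powi a) e \<in> XS ?S'"
      unfolding XS_def using lo Rspan_base[of e E] eE by (auto simp: rep_scale rep_basis)
    then have "p powi a \<in> I" unfolding I_def using eE by (force simp: rep_scale rep_basis)
    then have gnz: "g \<noteq> 0" using g pa by auto
    have "g \<in> I" using g by (metis R1 image_eqI mult_1_right)
    then obtain xe where xe: "xe \<in> XS ?S'" "rep xe e = g" unfolding I_def by blast
    have XSmono: "XS S \<subseteq> XS ?S'" unfolding XS_def by auto
    show ?case
    proof (intro exI[of _ "insert xe C"] conjI)
      show "finite (insert xe C)" using C by simp
      have "xe \<notin> span S" using span_coords0[of S xe e] insert gnz xe by auto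
      then show "independent (insert xe C)" using C independent_insertI by simp
      have xe_span: "xe \<in> span ?S'"
        using coords0_span[of ?S' xe] xe insert unfolding XS_def by auto
      show "span (insert xe C) = span ?S'"
      proof
        show "span (insert xe C) \<subseteq> span ?S'"
        proof (rule span_minimal)
          have "C \<subseteq> span ?S'" using C(3) span_superset[of C] span_mono[of S ?S'] by blast
          then show "insert xe C \<subseteq> span ?S'" using xe_span by blast
        qed (simp add: subspace_span)
        have "?S' \<subseteq> span (insert xe C)"
        proof
          fix y assume "y \<in> ?S'"
          show "y \<in> span (insert xe C)"
          proof (cases "y = e")
            case False
            then have "y \<in> span C" using \<open>y \<in> ?S'\<close> C span_base by auto
            then show ?thesis using span_mono[of C "insert xe C"] by auto
          next
            case True
            define w where "w = (\<Sum>e'\<in>S. rep xe e' *s e')"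
            have "w \<in> span C" unfolding w_def C(3) by (intro span_sum span_scale span_base)
            then have w: "w \<in> span (insert xe C)" using span_mono[of C "insert xe C"] by auto
            have "xe = (\<Sum>e'\<in>E. rep xe e' *s e')" by (rule expand)
            also have "\<dots> = (\<Sum>e'\<in>?S'. rep xe e' *s e')"
              using xe insert Efin unfolding XS_def by (intro sum.mono_neutral_cong_right) auto
            also have "\<dots> = g *s e + w" using insert xe unfolding w_def by simp
            finally have "e = inverse g *s (xe - w)" using gnz
              by (simp add: scale_right_diff_distrib)
            moreover have "xe - w \<in> span (insert xe C)" using w span_base span_diff by blast
            ultimately show ?thesis using True span_scale by metis
          qed
        qed
        then show "span ?S' \<subseteq> span (insert xe C)"
          by (simp add: span_minimal subspace_span)
      qed
      show "Rspan scale R (insert xe C) = XS ?S'"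
      proof
        show "Rspan scale R (insert xe C) \<subseteq> XS ?S'"
          by (rule Rspan_least[OF XS_Rsub]) (use xe C Rspan_base XSmono in blast)
        show "XS ?S' \<subseteq> Rspan scale R (insert xe C)"
        proof
          fix x assume x: "x \<in> XS ?S'"
          then have "rep x e \<in> I" unfolding I_def by blast
          then obtain r where r: "r \<in> R" "rep x e = g * r" using g by blast
          define z where "z = x - r *s xe"
          have "z \<in> X" unfolding z_def using x xe X Rsub_diff Rsub_scale r
            unfolding XS_def by blast
          moreover have "\<forall>e'\<in>E - S. rep z e' = 0"
          proof
            fix e' assume e': "e' \<in> E - S"
            show "rep z e' = 0"
            proof (cases "e' = e")
              case True then show ?thesis using r xe unfolding z_def by (simp add: rep_diff rep_scale)
            next
              case False then show ?thesis using x xe e' unfolding z_def XS_def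
                by (simp add: rep_diff rep_scale)
            qed
          qed
          ultimately have "z \<in> XS S" unfolding XS_def by blast
          then have "z \<in> Rspan scale R (insert xe C)" using C Rspan_mono[of C "insert xe C"] by auto
          moreover have "r *s xe \<in> Rspan scale R (insert xe C)"
            using Rspan_base[of xe "insert xe C"] Rspan_Rsub Rsub_scale r by blast
          ultimately have "z + r *s xe \<in> Rspan scale R (insert xe C)"
            using Rspan_Rsub Rsub_add by blast
          then show "x \<in> Rspan scale R (insert xe C)" unfolding z_def by simp
        qed
      qed
    qed
  qed
  obtain C where C: "finite C" "independent C" "span C = span E" "Rspan scale R C = XS E"
    using main[of E] by blast
  have "XS E = X" unfolding XS_def by simp
  then show ?thesis unfolding is_lattice_def using C Espan by blast
qed

end
end



lemma finite_uniform:
  assumes "finite S" "\<forall>s\<in>S. \<exists>c::nat. P c s" "\<And>c c' s. P c s \<Longrightarrow> c \<le> c' \<Longrightarrow> P c' s"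
  shows "\<exists>c. \<forall>s\<in>S. P c s"
  using assms(1,2)
proof (induction S rule: finite_induct)
  case empty then show ?case by simp
next
  case (insert a S)
  then obtain n where n: "\<forall>x\<in>S. P n x" by blast
  obtain m where m: "P m a" using insert by blast
  show ?case
    by (rule exI[of _ "n + m"]) (use n m assms(3) in \<open>auto intro: le_add1 le_add2\<close>)
qed

locale form_ctx = lat_ctx R p scale for R :: "'k::field set" and p :: 'k
  and scale :: "'k \<Rightarrow> 'v::ab_group_add \<Rightarrow> 'v" +
  fixes B :: "'v \<Rightarrow> 'v \<Rightarrow> 'k" and eps :: 'k
  assumes bil: "bilinear_form scale B" and nd: "nondegenerate B"
    and eps: "eps = 1 \<or> eps = -1" and sym: "\<forall>x y. B x y = eps * B y x"
begin

lemma BaddL: "B (x + y) z = B x z + B y z" using bil by (simp add: bilinear_form_def)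
lemma BaddR: "B x (y + z) = B x y + B x z" using bil by (simp add: bilinear_form_def)
lemma BscL: "B (c *s x) y = c * B x y" using bil by (simp add: bilinear_form_def)
lemma BscR: "B x (c *s y) = c * B x y" using bil by (simp add: bilinear_form_def)
lemma B0L: "B 0 y = 0" using BscL[of 0 0 y] by simp
lemma B0R: "B x 0 = 0" using BscR[of x 0 0] by simp
lemma BsumR: "B x (sum f T) = (\<Sum>i\<in>T. B x (f i))"
  by (induction T rule: infinite_finite_induct) (auto simp: B0R BaddR)
lemma BsumL: "B (sum f T) y = (\<Sum>i\<in>T. B (f i) y)"
  by (induction T rule: infinite_finite_induct) (auto simp: B0L BaddL)
lemma eps2: "eps * eps = 1" using eps by auto
lemma epsR: "eps \<in> R" using eps by auto
lemma B_swapR: "B y x \<in> R \<Longrightarrow> B x y \<in> R" using sym epsR by (metis Rmult)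

lemma bil_R:
  assumes "bilinear_form scale C" "\<forall>u\<in>U. \<forall>w\<in>W. C u w \<in> R"
    "x \<in> Rspan scale R U" "y \<in> Rspan scale R W"
  shows "C x y \<in> R"
proof -
  have CL: "C (a + b) z = C a z + C b z" "C (c *s a) z = c * C a z"
   and CR: "C z (a + b) = C z a + C z b" "C z (c *s a) = c * C z a" for a b c z
    using assms(1) by (auto simp: bilinear_form_def)
  have C0: "C 0 z = 0" "C z 0 = 0" for z using CL(2)[of 0 0 z] CR(2)[of z 0 0] by auto
  have 1: "Rspan scale R W \<subseteq> {y. \<forall>u\<in>U. C u y \<in> R}"
    by (rule Rspan_least) (use assms(2) in \<open>auto simp: Rsub_def C0 CR\<close>)
  have 2: "Rspan scale R U \<subseteq> {x. \<forall>y\<in>Rspan scale R W. C x y \<in> R}"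
    by (rule Rspan_least) (use 1 in \<open>auto simp: Rsub_def C0 CL\<close>)
  show ?thesis using 2 assms(3,4) by blast
qed

lemma dual_Rsub: "Rsub scale R (dual_lattice B R X)"
  unfolding Rsub_def dual_lattice_def by (auto simp: B0L BaddL BscL)

lemma dual_Rspan: "dual_lattice B R (Rspan scale R U) = dual_lattice B R U"
proof
  show "dual_lattice B R (Rspan scale R U) \<subseteq> dual_lattice B R U"
    unfolding dual_lattice_def using Rspan_base by blast
  show "dual_lattice B R U \<subseteq> dual_lattice B R (Rspan scale R U)"
  proof
    fix x assume x: "x \<in> dual_lattice B R U"
    have "Rspan scale R U \<subseteq> {y. B x y \<in> R}"
      by (rule Rspan_least) (use x in \<open>auto simp: Rsub_def dual_lattice_def B0R BaddR BscR\<close>)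
    then show "x \<in> dual_lattice B R (Rspan scale R U)" unfolding dual_lattice_def by blast
  qed
qed

context
  fixes E :: "'v set"
  assumes Efin: "finite E" and Eind: "independent E" and Espan: "span E = UNIV"
begin

abbreviation repE where "repE \<equiv> representation E"

lemmas rep_lemmas = rep_add[OF Efin Eind Espan] rep_diff[OF Efin Eind Espan]
  rep_scale[OF Efin Eind Espan] rep_basis[OF Efin Eind Espan] rep_lincomb[OF Efin Eind Espan]
  Rspan_coord[OF Efin Eind Espan]

lemma exp_E: "x = (\<Sum>e\<in>E. repE x e *s e)" by (rule expand[OF Efin Eind Espan])

lemma absorbE: "\<exists>c::nat. p ^ c *s x \<in> Rspan scale R E"
proof -
  obtain c where "\<forall>e\<in>E. p ^ c * repE x e \<in> R" using absorb_finite[OF Efin] by blast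
  then show ?thesis by (auto simp: rep_lemmas)
qed

lemma absorb_mono_v: "p ^ c *s x \<in> Rspan scale R E \<Longrightarrow> c \<le> c' \<Longrightarrow> p ^ c' *s x \<in> Rspan scale R E"
proof -
  assume a: "p ^ c *s x \<in> Rspan scale R E" "c \<le> c'"
  then have "p ^ (c' - c) *s (p ^ c *s x) \<in> Rspan scale R E"
    using Rspan_Rsub Rsub_scale Rpow pR by blast
  then show ?thesis using a(2) by (simp add: power_add[symmetric])
qed

lemma B_expandL: "B x y = (\<Sum>e\<in>E. repE x e * B e y)"
  by (subst exp_E[of x]) (simp add: BsumL BscL)

lemma B_expandR: "B x y = (\<Sum>e\<in>E. repE y e * B x e)"
  by (subst exp_E[of y]) (simp add: BsumR BscR)

lemma dual_basis: "\<exists>f. \<forall>e\<in>E. \<forall>e'\<in>E. B (f e) e' = (if e' = e then 1 else 0)"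
proof -
  define T where "T x = (\<Sum>e\<in>E. B x e *s e)" for x
  have repT: "repE (T x) e' = (if e' \<in> E then B x e' else 0)" for x e'
    unfolding T_def by (simp add: rep_lemmas)
  have lin: "Vector_Spaces.linear scale scale T"
    apply (rule linear_module_homI)
    unfolding module_hom_iff using module_axioms
    by (auto simp: T_def BaddL BscL scale_left_distrib sum.distrib scale_sum_right)
  have inj: "inj T"
  proof (rule injI)
    fix x y assume "T x = T y"
    then have "\<forall>e\<in>E. B x e = B y e" using repT by metis
    then have "B x z = B y z" for z
      using B_expandR[of x z] B_expandR[of y z] by (metis (no_types, lifting) sum.cong)
    moreover have "B (x - y) z = B x z - B y z" for z using BaddL[of "x - y" y z] by simp
    ultimately have "\<forall>z. B (x - y) z = 0" by simp
    then show "x = y" using nd unfolding nondegenerate_def by auto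
  qed
  interpret fd: finite_dimensional_vector_space scale E
    by unfold_locales (use Efin Eind Espan in auto)
  have "surj T" using fd.linear_inj_imp_surj[OF lin inj] .
  then have "\<forall>e. \<exists>x. T x = e" by (metis surjD)
  then obtain f where f: "\<forall>e. T (f e) = e" by metis
  show ?thesis
  proof (intro exI[of _ f] ballI)
    fix e e' assume "e \<in> E" "e' \<in> E"
    have "B (f e) e' = repE (T (f e)) e'" using repT \<open>e' \<in> E\<close> by simp
    also have "\<dots> = (if e' = e then 1 else 0)" using f \<open>e \<in> E\<close> by (simp add: rep_lemmas)
    finally show "B (f e) e' = (if e' = e then 1 else 0)" .
  qed
qed

lemma fB: "\<forall>e\<in>E. \<forall>e'\<in>E. B (f e) e' = (if e' = e then 1 else 0) \<Longrightarrow> e \<in> E \<Longrightarrow> B (f e) x = repE x e"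
proof -
  assume f: "\<forall>e\<in>E. \<forall>e'\<in>E. B (f e) e' = (if e' = e then 1 else 0)" and e: "e \<in> E"
  have "B (f e) x = (\<Sum>ea\<in>E. repE x ea * B (f e) ea)" by (rule B_expandR)
  also have "\<dots> = (\<Sum>ea\<in>E. if ea = e then repE x ea else 0)"
    using f e by (intro sum.cong) auto
  also have "\<dots> = repE x e" using Efin e by (simp add: sum.delta')
  finally show ?thesis .
qed

lemma double_dual: "dual_lattice B R (dual_lattice B R (Rspan scale R E)) \<subseteq> Rspan scale R E"
proof
  obtain f where f: "\<forall>e\<in>E. \<forall>e'\<in>E. B (f e) e' = (if e' = e then 1 else 0)" using dual_basis by blast
  fix x assume x: "x \<in> dual_lattice B R (dual_lattice B R (Rspan scale R E))"
  have "f e \<in> dual_lattice B R (Rspan scale R E)" if "e \<in> E" for e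
    unfolding dual_lattice_def using fB[OF f that] that by (auto simp: rep_lemmas)
  then have "B x (f e) \<in> R" if "e \<in> E" for e using x that unfolding dual_lattice_def by blast
  then have "B (f e) x \<in> R" if "e \<in> E" for e using that B_swapR by blast
  then show "x \<in> Rspan scale R E" using fB[OF f] by (auto simp: rep_lemmas)
qed

lemma dual_lower: "\<exists>c::nat. \<forall>x\<in>Rspan scale R E. \<forall>y\<in>Rspan scale R E. B (p ^ c *s x) y \<in> R"
proof -
  obtain c where c: "\<forall>s\<in>E \<times> E. p ^ c * (case s of (a, b) \<Rightarrow> B a b) \<in> R"
    using absorb_finite[of "E \<times> E"] Efin by blast
  have bl: "bilinear_form scale (\<lambda>x y. p ^ c * B x y)"
    unfolding bilinear_form_def by (auto simp: BaddL BaddR BscL BscR algebra_simps)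
  show ?thesis
    by (rule exI[of _ c], intro ballI, simp add: BscL, rule bil_R[OF bl]) (use c in auto)
qed

lemma dual_upper: "\<exists>c::nat. \<forall>x\<in>dual_lattice B R (Rspan scale R E). p ^ c *s x \<in> Rspan scale R E"
proof -
  obtain f where f: "\<forall>e\<in>E. \<forall>e'\<in>E. B (f e) e' = (if e' = e then 1 else 0)" using dual_basis by blast
  obtain c where c: "\<forall>e\<in>E. p ^ c *s f e \<in> Rspan scale R E"
    using finite_uniform[OF Efin, of "\<lambda>c e. p ^ c *s f e \<in> Rspan scale R E"] absorbE absorb_mono_v
    by blast
  show ?thesis
  proof (intro exI[of _ c] ballI)
    fix x assume x: "x \<in> dual_lattice B R (Rspan scale R E)"
    have "repE (p ^ c *s x) e \<in> R" if e: "e \<in> E" for e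
    proof -
      have "B x (p ^ c *s f e) \<in> R" using x c e unfolding dual_lattice_def by blast
      then have "B (p ^ c *s f e) x \<in> R" by (rule B_swapR)
      then have "p ^ c * repE x e \<in> R" using fB[OF f e] BscL by metis
      then show ?thesis using rep_scale[OF Efin Eind Espan] by metis
    qed
    then show "p ^ c *s x \<in> Rspan scale R E" using Rspan_coord[OF Efin Eind Espan] by blast
  qed
qed

end
end



context lat_ctx begin

lemma Rsub_plus:
  assumes "Rsub scale R X" "Rsub scale R Z"
  shows "Rsub scale R {a + b |a b. a \<in> X \<and> b \<in> Z}"
  unfolding Rsub_def
proof (intro conjI ballI)
  show "0 \<in> {a + b |a b. a \<in> X \<and> b \<in> Z}" using assms Rsub_0 by force
  fix x y assume "x \<in> {a + b |a b. a \<in> X \<and> b \<in> Z}" "y \<in> {a + b |a b. a \<in> X \<and> b \<in> Z}"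
  then obtain a b a' b' where "a \<in> X" "b \<in> Z" "a' \<in> X" "b' \<in> Z" "x = a + b" "y = a' + b'" by blast
  moreover have "x + y = (a + a') + (b + b')" using calculation by (simp add: algebra_simps)
  ultimately show "x + y \<in> {a + b |a b. a \<in> X \<and> b \<in> Z}" using assms Rsub_add by blast
next
  fix r x assume "r \<in> R" "x \<in> {a + b |a b. a \<in> X \<and> b \<in> Z}"
  then obtain a b where "a \<in> X" "b \<in> Z" "x = a + b" by blast
  moreover have "r *s x = r *s a + r *s b" using calculation by (simp add: scale_right_distrib)
  ultimately show "r *s x \<in> {a + b |a b. a \<in> X \<and> b \<in> Z}" using assms Rsub_scale \<open>r \<in> R\<close> by blast
qed

lemma sc_comp: "scale (p powi m) (scale (p powi n) x) = scale (p powi (m + n)) x"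
  by (simp add: power_int_add)

lemma sc_eq: "m + n = k \<Longrightarrow> scale (p powi m) (scale (p powi n) x) = scale (p powi k) x"
  using sc_comp by metis

lemma sc_p: "y \<in> sc n X \<Longrightarrow> p *s y \<in> sc (n + 1) X"
proof -
  assume "y \<in> sc n X"
  then obtain l where "l \<in> X" "y = p powi n *s l" by blast
  moreover have "p * p powi n = p powi (n + 1)" by (simp add: power_int_add)
  ultimately show ?thesis by (metis image_eqI scale_scale)
qed

lemma sc_mono_mem: "Rsub scale R X \<Longrightarrow> m \<le> n \<Longrightarrow> y \<in> sc n X \<Longrightarrow> y \<in> sc m X"
  using sc_mono by blast

lemma sc_in: "x \<in> X \<Longrightarrow> scale (p powi n) x \<in> sc n X" by blast

lemma pcomb: "p powi n * (p powi m * z) = p powi (n + m) * z"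
  by (simp add: power_int_add)

end

context form_ctx begin

lemma main:
  assumes Lat: "is_lattice scale R L"
  shows "almost_self_dual scale B R p (m_minus scale R p L (dual_lattice B R L))
    \<and> dual_lattice B R (m_minus scale R p L (dual_lattice B R L))
        = m_plus scale p L (dual_lattice B R L)"
proof -
  obtain E where Efin: "finite E" and Eind: "independent E" and Espan: "span E = UNIV"
    and LE: "L = Rspan scale R E"
    using Lat unfolding is_lattice_def by blast
  define N where "N = dual_lattice B R L"
  have RL: "Rsub scale R L" using LE Rspan_Rsub by simp
  have RN: "Rsub scale R N" unfolding N_def by (rule dual_Rsub)
  have LL: "dual_lattice B R N \<subseteq> L" unfolding N_def LE by (rule double_dual[OF Efin Eind Espan])
  have NL: "\<forall>l'\<in>N. \<forall>l\<in>L. B l' l \<in> R" unfolding N_def dual_lattice_def by blast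
  obtain c1 where c1: "\<forall>x\<in>L. \<forall>y\<in>L. B (p ^ c1 *s x) y \<in> R"
    using dual_lower[OF Efin Eind Espan] LE by blast
  obtain c2 where c2: "\<forall>x\<in>N. p ^ c2 *s x \<in> L"
    using dual_upper[OF Efin Eind Espan] LE N_def by blast
  define k1 where "k1 = int c1"
  define k2 where "k2 = int c2"
  have k1: "k1 \<ge> 0" and k2: "k2 \<ge> 0" unfolding k1_def k2_def by auto
  have cN: "sc k1 L \<subseteq> N"
  proof
    fix x assume "x \<in> sc k1 L"
    then obtain l where "l \<in> L" "x = p ^ c1 *s l" unfolding k1_def by (auto simp: power_int_of_nat)
    then show "x \<in> N" using c1 unfolding N_def dual_lattice_def by blast
  qed
  have dN: "N \<subseteq> sc (- k2) L"
  proof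
    fix x assume "x \<in> N"
    then have "scale (p powi (- (- k2))) x \<in> L" using c2 unfolding k2_def by (simp add: power_int_of_nat)
    then show "x \<in> sc (- k2) L" using sc_mem by blast
  qed
  have RscL: "Rsub scale R (sc n L)" for n using Rsub_sc[OF RL] .
  have RscN: "Rsub scale R (sc n N)" for n using Rsub_sc[OF RN] .
  define G where "G n = sc n L \<inter> sc (- n) N" for n
  define U where "U = (\<Union>n. G n)"
  define M where "M = Rspan scale R U"
  define Y where "Y k = {a + b |a b. a \<in> sc k L \<and> b \<in> sc (- k) N}" for k
  have hM: "m_minus scale R p L N = M" unfolding M_def U_def G_def m_minus_def by simp
  have hP: "m_plus scale p L N = (\<Inter>k. Y k)" unfolding Y_def m_plus_def by simp
  have RM: "Rsub scale R M" unfolding M_def by (rule Rspan_Rsub)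
  have GM: "y \<in> G n \<Longrightarrow> y \<in> M" for y n unfolding M_def U_def by (rule Rspan_base) blast
  have RY: "Rsub scale R (Y k)" for k unfolding Y_def by (rule Rsub_plus[OF RscL RscN])
  have Y1: "y \<in> sc k L \<Longrightarrow> y \<in> Y k" for y k
    unfolding Y_def using Rsub_0[OF RscN] by (metis (mono_tags, lifting) CollectI add_0_right)
  have Y2: "y \<in> sc (- k) N \<Longrightarrow> y \<in> Y k" for y k
    unfolding Y_def using Rsub_0[OF RscL] by (metis (mono_tags, lifting) CollectI add_0)

  
  have UU: "\<forall>u\<in>U. \<forall>w\<in>U. B u w \<in> R"
  proof (intro ballI)
    fix u w assume "u \<in> U" "w \<in> U"
    then obtain n m where u: "u \<in> G n" and w: "w \<in> G m" unfolding U_def by blast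
    show "B u w \<in> R"
    proof (cases "m \<le> n")
      case True
      obtain l where l: "l \<in> L" "u = p powi n *s l" using u unfolding G_def by blast
      obtain l' where l': "l' \<in> N" "w = p powi (- m) *s l'" using w unfolding G_def by blast
      have "B u w = p powi (n + - m) * B l l'" using l l' by (simp add: BscL BscR pcomb)
      moreover have "B l l' \<in> R" using NL l l' B_swapR by blast
      moreover have "p powi (n + - m) \<in> R" using True by (intro Rpowi) simp
      ultimately show ?thesis by (simp add: Rmult)
    next
      case False
      obtain l where l: "l \<in> L" "w = p powi m *s l" using w unfolding G_def by blast
      obtain l' where l': "l' \<in> N" "u = p powi (- n) *s l'" using u unfolding G_def by blast
      have "B u w = p powi (- n + m) * B l' l" using l l' by (simp add: BscL BscR pcomb mult.left_commute)
      moreover have "B l' l \<in> R" using NL l l' by blast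
      moreover have "p powi (- n + m) \<in> R" using False by (intro Rpowi) simp
      ultimately show ?thesis by (simp add: Rmult)
    qed
  qed
  have MM: "M \<subseteq> dual_lattice B R M"
    unfolding dual_lattice_def M_def using bil_R[OF bil UU] by blast
  have dM: "dual_lattice B R M = dual_lattice B R U" unfolding M_def by (rule dual_Rspan)

  
  have PM: "(\<Inter>k. Y k) \<subseteq> dual_lattice B R M"
  proof
    fix x assume x: "x \<in> (\<Inter>k. Y k)"
    have "B x u \<in> R" if uU: "u \<in> U" for u
    proof -
      obtain n where u: "u \<in> G n" using uU unfolding U_def by blast
      have "x \<in> Y n" using x by blast
      then obtain a b where ab: "x = a + b" "a \<in> sc n L" "b \<in> sc (- n) N" unfolding Y_def by blast
      obtain l where l: "l \<in> L" "a = p powi n *s l" using ab by blast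
      obtain l' where l': "l' \<in> N" "b = p powi (- n) *s l'" using ab by blast
      obtain m where m: "m \<in> L" "u = p powi n *s m" using u unfolding G_def by blast
      obtain m' where m': "m' \<in> N" "u = p powi (- n) *s m'" using u unfolding G_def by blast
      have "B a u = B l m'" using l m' by (simp add: BscL BscR pcomb)
      moreover have "B b u = B l' m" using l' m by (simp add: BscL BscR pcomb)
      moreover have "B l m' \<in> R" using NL l m' B_swapR by blast
      moreover have "B l' m \<in> R" using NL l' m by blast
      ultimately show ?thesis using ab by (simp add: BaddL Radd)
    qed
    then have "x \<in> dual_lattice B R U" unfolding dual_lattice_def by blast
    then show "x \<in> dual_lattice B R M" using dM by simp
  qed

  
  have MP: "dual_lattice B R M \<subseteq> (\<Inter>k. Y k)"
  proof
    fix x assume x: "x \<in> dual_lattice B R M"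
    have "x \<in> Y k" for k
    proof -
      define a where "a = \<bar>k\<bar> + k2"
      have lo: "\<forall>y\<in>Rspan scale R E. scale (p powi a) y \<in> Y k"
      proof
        fix y assume "y \<in> Rspan scale R E"
        then have y: "y \<in> L" using LE by simp
        have "p powi (a - k) *s y \<in> L" using y RL Rsub_scale Rpowi a_def k2 by simp
        then have "p powi k *s (p powi (a - k) *s y) \<in> sc k L" by blast
        moreover have "p powi a = p powi k * p powi (a - k)" using power_int_add[of p k "a - k"] by simp
        ultimately show "scale (p powi a) y \<in> Y k" using Y1 by simp
      qed
      have hi: "\<forall>z\<in>Y k. scale (p powi a) z \<in> Rspan scale R E"
      proof
        fix z assume "z \<in> Y k"
        then obtain u v where uv: "z = u + v" "u \<in> sc k L" "v \<in> sc (- k) N" unfolding Y_def by blast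
        obtain l where l: "l \<in> L" "u = p powi k *s l" using uv by blast
        obtain l' where l': "l' \<in> N" "v = p powi (- k) *s l'" using uv by blast
        have 1: "p powi a *s u = p powi (a + k) *s l" using l sc_eq[of a k "a + k" l] by simp
        have "p powi (a + k) \<in> R" using a_def k2 by (intro Rpowi) simp
        then have 1: "p powi a *s u \<in> L" unfolding 1 by (rule Rsub_scale[OF RL _ l(1)])
        have i1: "p powi k2 *s l' \<in> L" using c2 l' k2_def by (simp add: power_int_of_nat)
        have i2: "p powi a *s v = p powi (a + - k - k2) *s (p powi k2 *s l')"
          using l' sc_eq[of "a + - k - k2" k2 "a + - k" l'] sc_eq[of a "- k" "a + - k" l'] by (simp only:)
        have i3: "p powi (a + - k - k2) \<in> R" using a_def k2 by (intro Rpowi) simp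
        have 2: "p powi a *s v \<in> L" unfolding i2 by (rule Rsub_scale[OF RL i3 i1])
        show "scale (p powi a) z \<in> Rspan scale R E"
          using 1 2 uv RL Rsub_add LE by (simp add: scale_right_distrib)
      qed
      have "is_lattice scale R (Y k)" by (rule sandwich[OF Efin Eind Espan RY lo hi])
      then obtain F where Ffin: "finite F" and Find: "independent F" and Fspan: "span F = UNIV"
        and YF: "Y k = Rspan scale R F" unfolding is_lattice_def by blast
      have YY: "dual_lattice B R (dual_lattice B R (Y k)) \<subseteq> Y k"
        unfolding YF by (rule double_dual[OF Ffin Find Fspan])
      have DG: "dual_lattice B R (Y k) \<subseteq> G k"
      proof
        fix z assume z: "z \<in> dual_lattice B R (Y k)"
        have "p powi (- k) *s z \<in> dual_lattice B R N"
          unfolding dual_lattice_def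
        proof (intro CollectI ballI)
          fix w assume "w \<in> N"
          then have "p powi (- k) *s w \<in> Y k" using Y2 by blast
          then have "B z (p powi (- k) *s w) \<in> R" using z unfolding dual_lattice_def by blast
          then show "B (p powi (- k) *s z) w \<in> R" by (simp add: BscL BscR)
        qed
        then have 1: "z \<in> sc k L" using LL sc_mem by blast
        have "p powi (- (- k)) *s z \<in> N"
          unfolding N_def dual_lattice_def
        proof (intro CollectI ballI)
          fix w assume "w \<in> L"
          then have "p powi k *s w \<in> Y k" using Y1 by blast
          then have "B z (p powi k *s w) \<in> R" using z unfolding dual_lattice_def by blast
          then show "B (p powi (- (- k)) *s z) w \<in> R" by (simp add: BscL BscR)
        qed
        then have 2: "z \<in> sc (- k) N" using sc_mem by blast
        show "z \<in> G k" unfolding G_def using 1 2 by blast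
      qed
      have "x \<in> dual_lattice B R (dual_lattice B R (Y k))"
        unfolding dual_lattice_def
      proof (intro CollectI ballI)
        fix z assume "z \<in> {x. \<forall>y\<in>Y k. B x y \<in> R}"
        then have "z \<in> G k" using DG unfolding dual_lattice_def by blast
        then have "z \<in> M" using GM by blast
        then show "B x z \<in> R" using x unfolding dual_lattice_def by blast
      qed
      then show "x \<in> Y k" using YY by blast
    qed
    then show "x \<in> (\<Inter>k. Y k)" by blast
  qed

  
  have pM: "scale p ` dual_lattice B R M \<subseteq> M"
  proof
    fix y assume "y \<in> scale p ` dual_lattice B R M"
    then obtain x where x: "x \<in> dual_lattice B R M" "y = p *s x" by blast
    then have xY: "x \<in> Y n" for n using MP by blast
    obtain c0 where c0: "p ^ c0 *s x \<in> L" using absorbE[OF Efin Eind Espan] LE by blast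
    define k0 where "k0 = int c0"
    have k0: "k0 \<ge> 0" unfolding k0_def by simp
    have c0': "p powi k0 *s x \<in> L" using c0 unfolding k0_def by (simp add: power_int_of_nat)
    have xL: "x \<in> sc (- k0) L" using c0' sc_mem by simp
    have "p powi k1 *s (p powi k0 *s x) \<in> N" using c0' cN by blast
    then have "p powi (k0 + k1) *s x \<in> N" using sc_eq[of k1 k0 "k0 + k1" x] by (simp only: add.commute)
    then have "p powi (- (- (k0 + k1))) *s x \<in> N" by (simp only: minus_minus)
    then have xN: "x \<in> sc (- (k0 + k1)) N" using sc_mem by blast
    have "\<forall>n. \<exists>ab. x = fst ab + snd ab \<and> fst ab \<in> sc n L \<and> snd ab \<in> sc (- n) N"
    proof
      fix n
      obtain a b where "x = a + b" "a \<in> sc n L" "b \<in> sc (- n) N" using xY[of n] unfolding Y_def by blast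
      then show "\<exists>ab. x = fst ab + snd ab \<and> fst ab \<in> sc n L \<and> snd ab \<in> sc (- n) N"
        by (intro exI[of _ "(a, b)"]) simp
    qed
    from choice[OF this] obtain ab where
      ab: "\<forall>n. x = fst (ab n) + snd (ab n) \<and> fst (ab n) \<in> sc n L \<and> snd (ab n) \<in> sc (- n) N"
      by blast
    define A where "A n = fst (ab n)" for n
    define Bb where "Bb n = snd (ab n)" for n
    have AB: "x = A n + Bb n" "A n \<in> sc n L" "Bb n \<in> sc (- n) N" for n
      using ab unfolding A_def Bb_def by auto
    define n0 where "n0 = - k0"
    define n1 where "n1 = k0 + k1"
    have pG: "p *s y \<in> M" if "y \<in> G n" for y n using GM[OF that] RM Rsub_scale pR by blast
    have claim: "p *s Bb (n0 + int m) \<in> M" for m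
    proof (induction m)
      case 0
      have "Bb n0 = x - A n0" using AB(1)[of n0] by simp
      then have "Bb n0 \<in> sc n0 L" using Rsub_diff[OF RscL, of x n0 "A n0"] xL AB(2)[of n0] n0_def by simp
      then have "Bb n0 \<in> G n0" using AB(3) unfolding G_def by (rule IntI)
      then show ?case using pG by simp
    next
      case (Suc m)
      define n where "n = n0 + int m"
      have nS: "n0 + int (Suc m) = n + 1" unfolding n_def by simp
      define d where "d = A n - A (n + 1)"
      have e: "Bb (n + 1) + A (n + 1) = A n + Bb n" using AB(1)[of n] AB(1)[of "n+1"]
        by (simp add: add.commute)
      have dB: "Bb (n + 1) = Bb n + d"
      proof -
        have "Bb (n + 1) = (A n + Bb n) - A (n + 1)" using e by (simp add: eq_diff_eq)
        then show ?thesis unfolding d_def by (simp add: algebra_simps)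
      qed
      have "A (n + 1) \<in> sc n L" using sc_mono_mem[OF RL _ AB(2)[of "n+1"], of n] by simp
      then have "d \<in> sc n L" unfolding d_def by (rule Rsub_diff[OF RscL AB(2)[of n]])
      then have "p *s d \<in> sc (n + 1) L" by (rule sc_p)
      then have d1: "p *s d \<in> sc n L" using sc_mono_mem[OF RL, of n "n+1"] by simp
      have "Bb n \<in> sc (- (n + 1)) N" using sc_mono_mem[OF RN _ AB(3)[of n], of "- (n+1)"] by simp
      moreover have "d = Bb (n + 1) - Bb n" using dB by simp
      ultimately have "d \<in> sc (- (n + 1)) N" using Rsub_diff[OF RscN AB(3)[of "n+1"]] by simp
      then have "p *s d \<in> sc (- (n + 1) + 1) N" by (rule sc_p)
      then have d2: "p *s d \<in> sc (- n) N" by simp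
      have "p *s d \<in> G n" unfolding G_def using d1 d2 by (rule IntI)
      then have "p *s d \<in> M" by (rule GM)
      moreover have "p *s Bb n \<in> M" using Suc n_def by simp
      ultimately have "p *s Bb n + p *s d \<in> M" by (simp add: Rsub_add[OF RM])
      then show ?case unfolding nS dB by (simp add: scale_right_distrib)
    qed
    have n01: "n0 + int (nat (n1 - n0)) = n1" unfolding n0_def n1_def using k0 k1 by simp
    have b1: "p *s Bb n1 \<in> M" using claim[of "nat (n1 - n0)"] n01 by simp
    have "A n1 = x - Bb n1" using AB(1)[of n1] by simp
    then have "A n1 \<in> sc (- n1) N" using Rsub_diff[OF RscN, of x "- n1" "Bb n1"] xN AB(3)[of n1] n1_def by simp
    then have "p *s A n1 \<in> sc (- n1 + 1) N" by (rule sc_p)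
    then have a2: "p *s A n1 \<in> sc (- n1) N" using sc_mono_mem[OF RN, of "- n1" "- n1 + 1"] by simp
    have "p *s A n1 \<in> sc (n1 + 1) L" by (rule sc_p[OF AB(2)])
    then have a1: "p *s A n1 \<in> sc n1 L" using sc_mono_mem[OF RL, of n1 "n1 + 1"] by simp
    have "p *s A n1 \<in> G n1" unfolding G_def using a1 a2 by (rule IntI)
    then have "p *s A n1 \<in> M" by (rule GM)
    then have "p *s A n1 + p *s Bb n1 \<in> M" using b1 by (rule Rsub_add[OF RM])
    then show "y \<in> M" using x AB(1)[of n1] by (simp add: scale_right_distrib)
  qed

  
  have latM: "is_lattice scale R M"
  proof (rule sandwich[OF Efin Eind Espan RM])
    define a where "a = k1 + k2"
    show "\<forall>y\<in>Rspan scale R E. scale (p powi a) y \<in> M"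
    proof
      fix y assume "y \<in> Rspan scale R E"
      then have y: "y \<in> L" using LE by simp
      have 1: "p powi a *s y \<in> L" using y RL Rsub_scale Rpowi a_def k1 k2 by simp
      have "p powi k2 *s y \<in> L" using y RL Rsub_scale Rpowi k2 by simp
      then have "p powi k1 *s (p powi k2 *s y) \<in> N" using cN by blast
      then have 2: "p powi a *s y \<in> N" unfolding a_def using sc_eq[of k1 k2 "k1 + k2" y] by (simp only:)
      have "p powi a *s y \<in> G 0" unfolding G_def using 1 2 by simp
      then show "scale (p powi a) y \<in> M" using GM by blast
    qed
    have "U \<subseteq> sc (- a) L"
    proof
      fix u assume "u \<in> U"
      then obtain n where u: "u \<in> G n" unfolding U_def by blast
      show "u \<in> sc (- a) L"
      proof (cases "n \<ge> - a")
        case True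
        then show ?thesis using u sc_mono[OF RL True] unfolding G_def by blast
      next
        case False
        have "u \<in> sc (- n) N" using u unfolding G_def by blast
        also have "\<dots> \<subseteq> sc (- n) (sc (- k2) L)" using dN by blast
        also have "\<dots> = sc (- n + - k2) L" by (rule sc_sc)
        also have "\<dots> \<subseteq> sc (- a) L" using False a_def k1 k2 by (intro sc_mono[OF RL]) simp
        finally show ?thesis .
      qed
    qed
    then have Ma: "M \<subseteq> sc (- a) L" unfolding M_def by (rule Rspan_least[OF RscL])
    show "\<forall>x\<in>M. scale (p powi a) x \<in> Rspan scale R E"
    proof
      fix x assume "x \<in> M"
      then have "x \<in> sc (- a) L" by (rule subsetD[OF Ma])
      then have "scale (p powi (- (- a))) x \<in> L" by (simp only: sc_mem)
      then show "scale (p powi a) x \<in> Rspan scale R E" using LE by simp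
    qed
  qed

  have eq: "dual_lattice B R M = (\<Inter>k. Y k)" using PM MP by blast
  show ?thesis unfolding N_def[symmetric] hM hP almost_self_dual_def
    using latM pM MM eq by blast
qed

end


theorem theorem3p1p1:
  fixes R :: "'k::field set" and p :: 'k and eps :: 'k
    and scale :: "'k \<Rightarrow> 'v::ab_group_add \<Rightarrow> 'v"
    and B :: "'v \<Rightarrow> 'v \<Rightarrow> 'k" and L :: "'v set"
  assumes "dvr R" and "fraction_field_is_UNIV R" and "uniformizer R p"
    and "vector_space scale"
    and "\<exists>S. finite S \<and> module.span scale S = UNIV"
    and "bilinear_form scale B" and "nondegenerate B"
    and "eps = 1 \<or> eps = -1" and "\<forall>x y. B x y = eps * B y x"
    and "is_lattice scale R L"
  shows "almost_self_dual scale B R p (m_minus scale R p L (dual_lattice B R L))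
    \<and> dual_lattice B R (m_minus scale R p L (dual_lattice B R L))
        = m_plus scale p L (dual_lattice B R L)"
proof -
  interpret form_ctx R p scale B eps
    unfolding form_ctx_def lat_ctx_def dvr_ctx_def form_ctx_axioms_def
    using assms(1-4,6-9) by blast
  show ?thesis by (rule main[OF assms(10)])
qed

end
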